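(* Let $l:\mathbb{R}\to\mathbb{R}$ be continuous and $l_o(x):=\frac12(l(x)-l(-x))$. Then there exist $c_1,d_1,d_2\in\mathbb{R}$ such that $$\limsup_{x\to+\infty}\big(l_o(x)-c_1x-d_1\big)=0\quad\text{and}\quad\limsup_{x\to-\infty}\big(l_o(x)-c_1x-d_2\big)=0$$ if and only if there exist $q,q'\in\mathbb{R}$ such that $l_o(x)\le q'x+q$ for every $x\in\mathbb{R}$. *)

theory Defs
  imports "HOL-Analysis.Analysis"
begin

definition odd_part :: "(real \<Rightarrow> real) \<Rightarrow> real \<Rightarrow> real" where
  "odd_part l x = (l x - l (- x)) / 2"

end

theory Submission
  imports Defs
begin

lemma limsup_fin:
  fixes h :: "real \<Rightarrow> real" and F :: "real filter"
  assumes F: "F \<noteq> bot" and b: "\<And>x. \<bar>h x\<bar> \<le> q"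
  shows "\<exists>d. Limsup F (\<lambda>x. ereal (h x - d)) = 0"
proof -
  let ?L = "Limsup F (\<lambda>x. ereal (h x))"
  have "?L \<le> ereal q"
    by (rule Limsup_bounded) (use b abs_le_iff in \<open>auto intro!: always_eventually\<close>)
  moreover have "ereal (-q) \<le> Liminf F (\<lambda>x. ereal (h x))"
    by (rule Liminf_bounded, rule always_eventually) (use b in \<open>smt (verit) ereal_less_eq(3)\<close>)
  moreover have "Liminf F (\<lambda>x. ereal (h x)) \<le> ?L"
    using F by (intro Liminf_le_Limsup) auto
  ultimately obtain d where d: "?L = ereal d"
    by (cases ?L) auto
  have "Limsup F (\<lambda>x. ereal (h x - d)) = Limsup F (\<lambda>x. ereal (h x) + ereal (-d))"
    by simp
  also have "\<dots> = ?L + ereal (-d)"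
    using F by (intro Limsup_add_ereal_right) auto
  also have "\<dots> = 0" using d by simp
  finally show ?thesis by blast
qed

theorem lemma19:
  fixes l :: "real \<Rightarrow> real"
  assumes "continuous_on UNIV l"
  shows "(\<exists>c1 d1 d2 :: real.
            Limsup at_top (\<lambda>x. ereal (odd_part l x - c1 * x - d1)) = 0 \<and>
            Limsup at_bot (\<lambda>x. ereal (odd_part l x - c1 * x - d2)) = 0)
         \<longleftrightarrow> (\<exists>q q' :: real. \<forall>x. odd_part l x \<le> q' * x + q)"
proof
  assume "\<exists>c1 d1 d2 :: real.
            Limsup at_top (\<lambda>x. ereal (odd_part l x - c1 * x - d1)) = 0 \<and>
            Limsup at_bot (\<lambda>x. ereal (odd_part l x - c1 * x - d2)) = 0"
  then obtain c1 d1 d2 where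
    t: "Limsup at_top (\<lambda>x. ereal (odd_part l x - c1 * x - d1)) = 0" and
    b: "Limsup at_bot (\<lambda>x. ereal (odd_part l x - c1 * x - d2)) = 0" by blast
  have "eventually (\<lambda>x. ereal (odd_part l x - c1 * x - d1) < 1) at_top"
    by (rule Limsup_lessD) (simp add: t)
  then obtain M where M: "\<And>x. x \<ge> M \<Longrightarrow> odd_part l x - c1 * x - d1 < 1"
    unfolding eventually_at_top_linorder by auto
  have "eventually (\<lambda>x. ereal (odd_part l x - c1 * x - d2) < 1) at_bot"
    by (rule Limsup_lessD) (simp add: b)
  then obtain N where N: "\<And>x. x \<le> N \<Longrightarrow> odd_part l x - c1 * x - d2 < 1"
    unfolding eventually_at_bot_linorder by auto
  have cont: "continuous_on {N..M} (\<lambda>x. odd_part l x - c1 * x)"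
    unfolding odd_part_def
    by (intro continuous_intros continuous_on_compose2[OF assms]) auto
  have "bounded ((\<lambda>x. odd_part l x - c1 * x) ` {N..M})"
    by (intro compact_imp_bounded compact_continuous_image cont) auto
  then obtain B where B: "\<And>x. x \<in> {N..M} \<Longrightarrow> \<bar>odd_part l x - c1 * x\<bar> \<le> B"
    unfolding bounded_iff by (metis atLeastAtMost_iff image_eqI real_norm_def)
  have "\<forall>x. odd_part l x \<le> c1 * x + (\<bar>d1\<bar> + \<bar>d2\<bar> + 1 + \<bar>B\<bar>)"
  proof
    fix x
    show "odd_part l x \<le> c1 * x + (\<bar>d1\<bar> + \<bar>d2\<bar> + 1 + \<bar>B\<bar>)"
    proof (cases "x \<ge> M")
      case True then show ?thesis using M[of x] by linarith
    next
      case False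
      show ?thesis
      proof (cases "x \<le> N")
        case True then show ?thesis using N[of x] by linarith
      next
        case False2: False
        then show ?thesis using B[of x] False by fastforce
      qed
    qed
  qed
  then show "\<exists>q q' :: real. \<forall>x. odd_part l x \<le> q' * x + q" by blast
next
  assume "\<exists>q q' :: real. \<forall>x. odd_part l x \<le> q' * x + q"
  then obtain q q' where h: "\<And>x. odd_part l x \<le> q' * x + q" by blast
  have bd: "\<bar>odd_part l x - q' * x\<bar> \<le> q" for x
  proof -
    have "odd_part l (-x) = - odd_part l x" unfolding odd_part_def by (simp add: field_simps)
    then show ?thesis using h[of x] h[of "-x"] by auto
  qed
  obtain d1 where d1: "Limsup at_top (\<lambda>x. ereal (odd_part l x - q' * x - d1)) = 0"
    using limsup_fin[of at_top "\<lambda>x. odd_part l x - q' * x", OF _ bd] by auto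
  obtain d2 where d2: "Limsup at_bot (\<lambda>x. ereal (odd_part l x - q' * x - d2)) = 0"
    using limsup_fin[of at_bot "\<lambda>x. odd_part l x - q' * x", OF _ bd] by auto
  show "\<exists>c1 d1 d2 :: real.
            Limsup at_top (\<lambda>x. ereal (odd_part l x - c1 * x - d1)) = 0 \<and>
            Limsup at_bot (\<lambda>x. ereal (odd_part l x - c1 * x - d2)) = 0"
    using d1 d2 by blast
qed

end
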